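(* Let $\mathcal H$ be a finite-dimensional Hilbert space of dimension $d$, and let $\mathscr L\in\mathcal L(\mathcal L(\mathcal H))$ have the minimal presentation $\mathscr L\rho=\Psi\rho-(G\rho+\rho G)-i(H\rho-\rho H)$, with $\Psi$ CP, $G,H$ hermitian, $\mathfrak J\Psi$ supported on the trace-zero operators and $\operatorname{Tr}H=0$. Suppose the semigroup $(e^{t\mathscr L})_{t\ge0}$ is trace non-increasing. Then, with $\langle\cdot\rangle$ denoting the average over the unitary group $U(\mathcal H)$ with respect to normalized Haar measure, $$\big\langle \mathscr L(U)\,U^{-1}\big\rangle=-G-\frac{\operatorname{Tr}G}{d}\,\mathrm{Id}_{\mathcal H}-iH,$$ and consequently $\|G\|\le\|\mathscr L\|$, $\|H\|\le\|\mathscr L\|$ and $\|\Psi\|\le5\|\mathscr L\|$, where $\|G\|,\|H\|$ are operator norms on $\mathcal H$ and $\|\mathscr L\|,\|\Psi\|$ are the norms of these superoperators acting on $\mathcal L(\mathcal H)$ equipped with the operator norm.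
   Context: $\mathcal L(\mathcal H)$ carries the Hilbert–Schmidt inner product $\langle A,B\rangle=\operatorname{Tr}A^\dagger B$. CP means: for every $N\ge1$, $\Psi\otimes\mathrm{Id}_{\mathcal L(\mathbb C^N)}$ maps positive semidefinite operators to positive semidefinite operators. The Jamiołkowski transform $\mathfrak J\Psi$ is the operator on $\mathcal L(\mathcal H)$ with $\langle m\overline k,(\mathfrak J\Psi)(n\overline h)\rangle=\langle m\overline n,\Psi(k\overline h)\rangle$ for all $m,n,h,k\in\mathcal H$ ($k\overline h$ is $x\mapsto k\langle h,x\rangle$); "supported on the trace-zero operators" means $\mathfrak J\Psi$ annihilates $\mathrm{Id}_{\mathcal H}$ and has range in $\{A:\operatorname{Tr}A=0\}$. Trace non-increasing means $\operatorname{Tr}e^{t\mathscr L}\rho\le\operatorname{Tr}\rho$ for all $t\ge0$ and positive semidefinite $\rho$. *)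

theory Defs
  imports "HOL-Analysis.Analysis" "HOL-Library.Complex_Order"
begin

text \<open>The Hilbert space is \<open>complex ^ 'n\<close> (dimension \<open>d = CARD('n)\<close>) with the standard
inner product; operators are matrices \<open>complex ^ 'n ^ 'n\<close>; superoperators are maps
\<open>complex ^ 'n ^ 'n \<Rightarrow> complex ^ 'n ^ 'n\<close>.\<close>

type_synonym 'n op = "complex ^ ('n::finite) ^ 'n"
type_synonym 'n sop = "('n::finite) op \<Rightarrow> 'n op"

definition cinner :: "complex ^ ('n::finite) \<Rightarrow> complex ^ 'n \<Rightarrow> complex" where
  "cinner x y = (\<Sum>i\<in>UNIV. cnj (x $ i) * y $ i)"

definition adj :: "('n::finite) op \<Rightarrow> 'n op" where
  "adj A = (\<chi> i j. cnj (A $ j $ i))"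

definition cscale :: "complex \<Rightarrow> ('n::finite) op \<Rightarrow> 'n op" (infixr "*#" 75) where
  "c *# A = (\<chi> i j. c * A $ i $ j)"

definition tr :: "('n::finite) op \<Rightarrow> complex" where
  "tr A = (\<Sum>i\<in>UNIV. A $ i $ i)"

definition ket_bra :: "complex ^ ('n::finite) \<Rightarrow> complex ^ 'n \<Rightarrow> 'n op" where
  "ket_bra k h = (\<chi> i j. k $ i * cnj (h $ j))"

definition hs :: "('n::finite) op \<Rightarrow> 'n op \<Rightarrow> complex" where
  "hs A B = tr (adj A ** B)"

definition hermitian :: "('n::finite) op \<Rightarrow> bool" where
  "hermitian A \<longleftrightarrow> adj A = A"

definition psd :: "('n::finite) op \<Rightarrow> bool" where
  "psd A \<longleftrightarrow> (\<forall>x. 0 \<le> cinner x (A *v x))"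

definition unitary :: "('n::finite) op \<Rightarrow> bool" where
  "unitary U \<longleftrightarrow> adj U ** U = mat 1"

definition clinear_sop :: "('n::finite) sop \<Rightarrow> bool" where
  "clinear_sop L \<longleftrightarrow> (\<forall>A B. L (A + B) = L A + L B) \<and> (\<forall>c A. L (c *# A) = c *# L A)"

text \<open>Positivity of a block operator \<open>\<Sum>_{j,k<N} X j k \<otimes> E_{jk}\<close> on \<open>H \<otimes> \<complex>^N\<close>.\<close>
definition block_psd :: "nat \<Rightarrow> (nat \<Rightarrow> nat \<Rightarrow> ('n::finite) op) \<Rightarrow> bool" where
  "block_psd N X \<longleftrightarrow>
     (\<forall>v :: nat \<Rightarrow> complex ^ 'n. 0 \<le> (\<Sum>j<N. \<Sum>k<N. cinner (v j) (X j k *v v k)))"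

text \<open>Complete positivity: \<open>\<Psi> \<otimes> Id_{L(\<complex>^N)}\<close> maps PSD to PSD for every \<open>N \<ge> 1\<close>;
  \<open>(\<Psi> \<otimes> Id)(\<Sum> X_{jk} \<otimes> E_{jk}) = \<Sum> \<Psi>(X_{jk}) \<otimes> E_{jk}\<close>.\<close>
definition completely_positive :: "('n::finite) sop \<Rightarrow> bool" where
  "completely_positive \<Psi> \<longleftrightarrow> clinear_sop \<Psi> \<and>
     (\<forall>N::nat. N \<ge> 1 \<longrightarrow> (\<forall>X. block_psd N X \<longrightarrow> block_psd N (\<lambda>j k. \<Psi> (X j k))))"

definition jam :: "('n::finite) sop \<Rightarrow> 'n sop" where
  "jam \<Psi> = (THE J. clinear_sop J \<and>
     (\<forall>m n h k. hs (ket_bra m k) (J (ket_bra n h)) = hs (ket_bra m n) (\<Psi> (ket_bra k h))))"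

definition supported_trace_zero :: "('n::finite) sop \<Rightarrow> bool" where
  "supported_trace_zero J \<longleftrightarrow> J (mat 1) = 0 \<and> (\<forall>A. tr (J A) = 0)"

definition sexp :: "('n::finite) sop \<Rightarrow> 'n sop" where
  "sexp L \<rho> = (\<Sum>k. scaleR (1 / fact k) ((L ^^ k) \<rho>))"

definition trace_nonincreasing :: "('n::finite) sop \<Rightarrow> bool" where
  "trace_nonincreasing L \<longleftrightarrow>
     (\<forall>t::real. t \<ge> 0 \<longrightarrow> (\<forall>\<rho>. psd \<rho> \<longrightarrow> tr (sexp (\<lambda>A. of_real t *# L A) \<rho>) \<le> tr \<rho>))"

definition opnorm :: "('n::finite) op \<Rightarrow> real" where
  "opnorm A = onorm (\<lambda>x. A *v x)"

definition sopnorm :: "('n::finite) sop \<Rightarrow> real" where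
  "sopnorm L = (SUP A\<in>{A. opnorm A \<le> 1}. opnorm (L A))"

definition haar :: "('n::finite) op measure \<Rightarrow> bool" where
  "haar \<mu> \<longleftrightarrow> emeasure \<mu> (space \<mu>) = 1 \<and> sets \<mu> = sets borel \<and>
     {U. unitary U} \<in> sets \<mu> \<and> emeasure \<mu> {U. unitary U} = 1 \<and>
     (\<forall>V. unitary V \<longrightarrow> distr \<mu> \<mu> (\<lambda>U. V ** U) = \<mu> \<and> distr \<mu> \<mu> (\<lambda>U. U ** V) = \<mu>)"

end

theory Submission
  imports Defs "HOL-Probability.Probability_Measure"
begin


definition emat :: "'n \<Rightarrow> 'n \<Rightarrow> ('n::finite) op" where
  "emat i j = (\<chi> a b. if a = i \<and> b = j then 1 else 0)"

lemma cscale_nth[simp]: "(c *# A) $ i $ j = c * A $ i $ j"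
  by (simp add: cscale_def)

lemma emat_nth[simp]: "emat i j $ a $ b = (if a = i \<and> b = j then 1 else 0)"
  by (simp add: emat_def)

lemma mat_expand: "(A::('n::finite) op) = (\<Sum>i\<in>UNIV. \<Sum>j\<in>UNIV. A $ i $ j *# emat i j)"
proof -
  have "(\<Sum>i\<in>UNIV. \<Sum>j\<in>UNIV. A $ i $ j *# emat i j) $ a $ b = A $ a $ b" for a b
  proof -
    have "(\<Sum>i\<in>UNIV. \<Sum>j\<in>UNIV. A $ i $ j *# emat i j) $ a $ b
        = (\<Sum>i\<in>UNIV. \<Sum>j\<in>UNIV. (if a = i \<and> b = j then A $ i $ j else 0))"
      by (simp add: if_distrib cong: if_cong)
    also have "\<dots> = (\<Sum>i\<in>UNIV. if a = i then (\<Sum>j\<in>UNIV. if b = j then A $ i $ j else 0) else 0)"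
      by (intro sum.cong) auto
    also have "\<dots> = A $ a $ b"
      by simp
    finally show ?thesis .
  qed
  then show ?thesis by (simp add: vec_eq_iff)
qed

lemma clin_add: "clinear_sop L \<Longrightarrow> L (A + B) = L A + L B"
  by (simp add: clinear_sop_def)
lemma clin_scale: "clinear_sop L \<Longrightarrow> L (c *# A) = c *# L A"
  by (simp add: clinear_sop_def)
lemma clin_zero: "clinear_sop L \<Longrightarrow> L 0 = 0"
  using clin_add[of L 0 0] by simp
lemma clin_sum: "clinear_sop L \<Longrightarrow> L (sum f S) = (\<Sum>x\<in>S. L (f x))"
  by (induction S rule: infinite_finite_induct) (auto simp: clin_zero clin_add)
lemma cscale_minus1: "(-1) *# A = - A"
  by (simp add: vec_eq_iff)
lemma clin_neg: "clinear_sop L \<Longrightarrow> L (- A) = - L A"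
  using clin_scale[of L "-1" A] by (simp add: cscale_minus1)
lemma clin_diff: "clinear_sop L \<Longrightarrow> L (A - B) = L A - L B"
  using clin_add[of L A "-B"] clin_neg[of L B] by simp

lemma clin_expand: "clinear_sop L \<Longrightarrow> L A = (\<Sum>i\<in>UNIV. \<Sum>j\<in>UNIV. A $ i $ j *# L (emat i j))"
  apply (subst mat_expand[of A])
  by (simp add: clin_sum clin_scale)



definition ev :: "'n \<Rightarrow> complex ^ ('n::finite)" where
  "ev i = (\<chi> j. if j = i then 1 else 0)"

lemma ev_nth[simp]: "ev i $ j = (if j = i then 1 else 0)"
  by (simp add: ev_def)

lemma ket_bra_nth[simp]: "ket_bra k h $ i $ j = k $ i * cnj (h $ j)"
  by (simp add: ket_bra_def)

lemma adj_nth[simp]: "adj A $ i $ j = cnj (A $ j $ i)"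
  by (simp add: adj_def)

lemma hs_ket_bra: "hs (ket_bra m k) X = (\<Sum>r\<in>UNIV. \<Sum>i\<in>UNIV. cnj (m $ r) * k $ i * X $ r $ i)"
  unfolding hs_def tr_def
  apply (simp add: matrix_matrix_mult_def mult_ac)
  apply (subst sum.swap)
  apply simp
  done

lemma ket_bra_ev: "ket_bra (ev b) (ev d) = emat b d"
  by (simp add: vec_eq_iff)

lemma ifmult: "(if P then 1 else 0) * (x::complex) = (if P then x else 0)"
  "(x::complex) * (if P then 1 else 0) = (if P then x else 0)" by auto

lemma double_delta: "(\<Sum>r\<in>(UNIV::'n::finite set). \<Sum>i\<in>(UNIV::'m::finite set). if r = a \<and> i = c then f r i else 0) = f a c"
proof -
  have "(\<Sum>r\<in>(UNIV::'n::finite set). \<Sum>i\<in>(UNIV::'m::finite set). if r = a \<and> i = c then f r i else 0)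
      = (\<Sum>r\<in>(UNIV::'n::finite set). if r = a then (\<Sum>i\<in>(UNIV::'m::finite set). if i = c then f r i else 0) else 0)"
    by (intro sum.cong) auto
  then show ?thesis by simp
qed

lemma hs_ev: "hs (emat a c) X = X $ a $ c"
proof -
  have "hs (ket_bra (ev a) (ev c)) X = (\<Sum>r\<in>UNIV. \<Sum>i\<in>UNIV. if r = a \<and> i = c then X $ r $ i else 0)"
    unfolding hs_ket_bra by (intro sum.cong) auto
  then show ?thesis by (simp add: double_delta ket_bra_ev)
qed

definition J0 :: "('n::finite) sop \<Rightarrow> 'n sop" where
  "J0 \<Psi> Y = (\<chi> a c. \<Sum>b\<in>UNIV. \<Sum>d\<in>UNIV. Y $ b $ d * \<Psi> (emat c d) $ a $ b)"

lemma J0_nth: "J0 \<Psi> Y $ a $ c = (\<Sum>b\<in>UNIV. \<Sum>d\<in>UNIV. Y $ b $ d * \<Psi> (emat c d) $ a $ b)"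
  by (simp add: J0_def)

lemma J0_clin: "clinear_sop (J0 \<Psi>)"
  unfolding clinear_sop_def
  by (simp add: vec_eq_iff J0_nth distrib_right distrib_left sum.distrib sum_distrib_left mult_ac)

lemma sum3_rot: "(\<Sum>i\<in>A. \<Sum>j\<in>B. \<Sum>l\<in>C. f i j l) = (\<Sum>l\<in>C. \<Sum>i\<in>A. \<Sum>j\<in>B. f i j l)"
proof -
  have "(\<Sum>i\<in>A. \<Sum>j\<in>B. \<Sum>l\<in>C. f i j l) = (\<Sum>i\<in>A. \<Sum>l\<in>C. \<Sum>j\<in>B. f i j l)"
    by (intro sum.cong refl sum.swap)
  also have "\<dots> = (\<Sum>l\<in>C. \<Sum>i\<in>A. \<Sum>j\<in>B. f i j l)"
    by (rule sum.swap)
  finally show ?thesis .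
qed

lemma J0_prop:
  assumes "clinear_sop \<Psi>"
  shows "hs (ket_bra m k) (J0 \<Psi> (ket_bra n h)) = hs (ket_bra m n) (\<Psi> (ket_bra k h))"
proof -
  have e: "\<Psi> (ket_bra k h) = (\<Sum>i\<in>UNIV. \<Sum>d\<in>UNIV. (k $ i * cnj (h $ d)) *# \<Psi> (emat i d))"
    using clin_expand[OF assms, of "ket_bra k h"] by simp
  define T where "T r b c d = cnj (m $ r) * n $ b * k $ c * cnj (h $ d) * \<Psi> (emat c d) $ r $ b" for r b c d
  have L: "hs (ket_bra m k) (J0 \<Psi> (ket_bra n h)) = (\<Sum>r\<in>UNIV. \<Sum>c\<in>UNIV. \<Sum>b\<in>UNIV. \<Sum>d\<in>UNIV. T r b c d)"
    unfolding hs_ket_bra J0_nth T_def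
    by (intro sum.cong refl) (simp add: sum_distrib_left mult_ac)
  have R: "hs (ket_bra m n) (\<Psi> (ket_bra k h)) = (\<Sum>r\<in>UNIV. \<Sum>b\<in>UNIV. \<Sum>c\<in>UNIV. \<Sum>d\<in>UNIV. T r b c d)"
    unfolding hs_ket_bra e T_def
    by (intro sum.cong refl) (simp add: sum_distrib_left mult_ac)
  show ?thesis unfolding L R
    by (rule sum.cong[OF refl], rule sum.swap)
qed

lemma J_unique:
  assumes "clinear_sop J" and
    p: "\<forall>m n h k. hs (ket_bra m k) (J (ket_bra n h)) = hs (ket_bra m n) (\<Psi> (ket_bra k h))"
  shows "J = J0 \<Psi>"
proof
  fix Y
  have ent: "J (emat b d) $ a $ c = \<Psi> (emat c d) $ a $ b" for a b c d
    using p[rule_format, of "ev a" "ev c" "ev b" "ev d"] by (simp add: hs_ev ket_bra_ev)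
  show "J Y = J0 \<Psi> Y"
    using clin_expand[OF assms(1), of Y]
    by (simp add: vec_eq_iff J0_nth ent)
qed

lemma jam_eq: "clinear_sop \<Psi> \<Longrightarrow> jam \<Psi> = J0 \<Psi>"
  unfolding jam_def
  apply (rule the_equality)
  using J0_clin J0_prop J_unique by blast+

lemma jam_psi_part:
  assumes "clinear_sop \<Psi>" "supported_trace_zero (jam \<Psi>)"
  shows "(\<Sum>b\<in>UNIV. \<Psi> (emat c b) $ a $ b) = 0"
proof -
  have "J0 \<Psi> (mat 1) $ a $ c = 0"
    using assms by (simp add: jam_eq supported_trace_zero_def)
  then show ?thesis
    by (simp add: J0_nth mat_def ifmult)
qed



lemma haar_prob: "haar \<mu> \<Longrightarrow> prob_space \<mu>"
  by (rule prob_spaceI) (simp add: haar_def)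

lemma haar_sets: "haar \<mu> \<Longrightarrow> sets \<mu> = sets borel"
  by (simp add: haar_def)

lemma haar_meas:
  assumes "haar \<mu>" "continuous_on UNIV (f :: ('n::finite) op \<Rightarrow> 'b::topological_space)"
  shows "f \<in> borel_measurable \<mu>"
  using borel_measurable_continuous_onI[OF assms(2)] measurable_cong_sets[OF haar_sets[OF assms(1)] refl]
  by blast

lemma haar_AE_unitary:
  assumes "haar \<mu>" shows "AE U in \<mu>. unitary U"
proof -
  interpret prob_space \<mu> using haar_prob[OF assms] .
  have "prob {U. unitary U} = 1" using assms by (simp add: haar_def measure_def)
  then have "AE U in \<mu>. U \<in> {U. unitary U}" by (rule AE_prob_1)
  then show ?thesis by simp
qed

lemma cont_mult_left: "continuous_on UNIV (\<lambda>U::('n::finite) op. V ** U)"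
  unfolding matrix_matrix_mult_def
  by (intro continuous_intros)
lemma cont_mult_right: "continuous_on UNIV (\<lambda>U::('n::finite) op. U ** V)"
  unfolding matrix_matrix_mult_def
  by (intro continuous_intros)

lemma haar_inv_left:
  assumes "haar \<mu>" "unitary V" "continuous_on UNIV (f :: ('n::finite) op \<Rightarrow> complex)"
  shows "integral\<^sup>L \<mu> f = integral\<^sup>L \<mu> (\<lambda>U. f (V ** U))"
proof -
  have d: "distr \<mu> \<mu> (\<lambda>U. V ** U) = \<mu>" using assms(1,2) by (simp add: haar_def)
  have g: "(\<lambda>U. V ** U) \<in> measurable \<mu> \<mu>"
    using borel_measurable_continuous_onI[OF cont_mult_left[of V]]
      measurable_cong_sets[OF haar_sets[OF assms(1)] haar_sets[OF assms(1)]] by blast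
  have "integral\<^sup>L (distr \<mu> \<mu> (\<lambda>U. V ** U)) f = integral\<^sup>L \<mu> (\<lambda>U. f (V ** U))"
    by (rule integral_distr[OF g haar_meas[OF assms(1,3)]])
  then show ?thesis using d by simp
qed

lemma haar_inv_right:
  assumes "haar \<mu>" "unitary V" "continuous_on UNIV (f :: ('n::finite) op \<Rightarrow> complex)"
  shows "integral\<^sup>L \<mu> f = integral\<^sup>L \<mu> (\<lambda>U. f (U ** V))"
proof -
  have d: "distr \<mu> \<mu> (\<lambda>U. U ** V) = \<mu>" using assms(1,2) by (simp add: haar_def)
  have g: "(\<lambda>U. U ** V) \<in> measurable \<mu> \<mu>"
    using borel_measurable_continuous_onI[OF cont_mult_right[of V]]
      measurable_cong_sets[OF haar_sets[OF assms(1)] haar_sets[OF assms(1)]] by blast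
  have "integral\<^sup>L (distr \<mu> \<mu> (\<lambda>U. U ** V)) f = integral\<^sup>L \<mu> (\<lambda>U. f (U ** V))"
    by (rule integral_distr[OF g haar_meas[OF assms(1,3)]])
  then show ?thesis using d by simp
qed

lemma unitary_col: "unitary U \<Longrightarrow> (\<Sum>i\<in>UNIV. cnj (U $ i $ j) * U $ i $ j) = 1"
  unfolding unitary_def
  by (drule arg_cong[where f="\<lambda>A. A $ j $ j"]) (simp add: matrix_matrix_mult_def mat_def)

lemma unitary_col_real: "unitary U \<Longrightarrow> (\<Sum>i\<in>UNIV. (cmod (U $ i $ j))^2) = 1"
proof -
  assume "unitary U"
  then have "(\<Sum>i\<in>UNIV. cnj (U $ i $ j) * U $ i $ j) = 1" by (rule unitary_col)
  moreover have "(\<Sum>i\<in>UNIV. cnj (U $ i $ j) * U $ i $ j) = (\<Sum>i\<in>UNIV. complex_of_real ((cmod (U $ i $ j))^2))"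
    by (intro sum.cong refl) (metis complex_norm_square of_real_power mult.commute)
  ultimately have "(\<Sum>i\<in>UNIV. complex_of_real ((cmod (U $ i $ j))^2)) = 1"
    by simp
  then show ?thesis by (metis of_real_eq_1_iff of_real_sum)
qed

lemma unitary_entry_le: "unitary U \<Longrightarrow> cmod (U $ i $ j) \<le> 1"
proof -
  assume "unitary U"
  then have s: "(\<Sum>i\<in>UNIV. (cmod (U $ i $ j))^2) = 1" by (rule unitary_col_real)
  have "(cmod (U $ i $ j))^2 \<le> (\<Sum>i\<in>UNIV. (cmod (U $ i $ j))^2)"
    by (rule member_le_sum) auto
  then have "(cmod (U $ i $ j))^2 \<le> 1" using s by simp
  then show ?thesis by (simp add: power_le_one_iff abs_le_iff power2_le_iff_abs_le)
qed

lemma cont_entry2: "continuous_on UNIV (\<lambda>U::('n::finite) op. U $ i $ j * cnj (U $ k $ l))"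
  by (intro continuous_intros)

lemma integrable_entry2:
  assumes "haar \<mu>"
  shows "integrable \<mu> (\<lambda>U::('n::finite) op. U $ i $ j * cnj (U $ k $ l))"
proof -
  interpret prob_space \<mu> using haar_prob[OF assms] .
  show ?thesis
  proof (rule integrable_const_bound[where B=1])
    show "AE U in \<mu>. norm (U $ i $ j * cnj (U $ k $ l)) \<le> 1"
      using haar_AE_unitary[OF assms]
    proof eventually_elim
      case (elim U)
      then show ?case using unitary_entry_le[OF elim, of i j] unitary_entry_le[OF elim, of k l]
        by (simp add: norm_mult mult_le_one)
    qed
    show "(\<lambda>U. U $ i $ j * cnj (U $ k $ l)) \<in> borel_measurable \<mu>"
      by (rule haar_meas[OF assms cont_entry2])
  qed
qed



definition dmat :: "('n::finite \<Rightarrow> complex) \<Rightarrow> 'n op" where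
  "dmat s = (\<chi> a b. if a = b then s a else 0)"

definition pmat :: "('n::finite \<Rightarrow> 'n) \<Rightarrow> 'n op" where
  "pmat \<tau> = (\<chi> a b. if b = \<tau> a then 1 else 0)"

lemma sum_delta_l: "(\<Sum>c\<in>(UNIV::'n::finite set). (if c = a then x else 0) * (y c::complex)) = x * y a"
proof -
  have "(\<Sum>c\<in>(UNIV::'n::finite set). (if c = a then x else 0) * (y c::complex)) = (\<Sum>c\<in>UNIV. if c = a then x * y a else 0)"
    by (intro sum.cong) auto
  then show ?thesis by simp
qed

lemma sum_delta_r: "(\<Sum>c\<in>(UNIV::'n::finite set). (y c::complex) * (if c = a then x else 0)) = y a * x"
proof -
  have "(\<Sum>c\<in>(UNIV::'n::finite set). (y c::complex) * (if c = a then x else 0)) = (\<Sum>c\<in>UNIV. if c = a then y a * x else 0)"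
    by (intro sum.cong) auto
  then show ?thesis by simp
qed

lemma cnj_if: "cnj (if P then x else 0) = (if P then cnj x else 0)" by simp

lemma dmat_nth: "dmat s $ a $ b = (if a = b then s a else 0)"
  by (simp add: dmat_def)

lemma dmat_left: "(dmat s ** U) $ a $ b = s a * U $ a $ b"
proof -
  have "(dmat s ** U) $ a $ b = (\<Sum>c\<in>UNIV. (if c = a then s a else 0) * U $ c $ b)"
    unfolding matrix_matrix_mult_def dmat_nth by (simp, intro sum.cong) auto
  then show ?thesis by (simp only: sum_delta_l)
qed

lemma dmat_right: "(U ** dmat s) $ a $ b = U $ a $ b * s b"
proof -
  have "(U ** dmat s) $ a $ b = (\<Sum>c\<in>UNIV. U $ a $ c * (if c = b then s b else 0))"
    unfolding matrix_matrix_mult_def dmat_nth by (simp, intro sum.cong) auto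
  then show ?thesis by (simp only: sum_delta_r)
qed

lemma dmat_unitary: assumes "\<And>a. cnj (s a) * s a = 1" shows "unitary (dmat s)"
proof -
  have "(adj (dmat s) ** dmat s) $ a $ b = mat 1 $ a $ b" for a b
  proof -
    have "(adj (dmat s) ** dmat s) $ a $ b = (\<Sum>c\<in>UNIV. (if c = a then cnj (s a) else 0) * (if c = b then s b else 0))"
      unfolding matrix_matrix_mult_def by (simp add: dmat_nth, intro sum.cong) auto
    also have "\<dots> = cnj (s a) * (if a = b then s b else 0)" by (rule sum_delta_l)
    also have "\<dots> = mat 1 $ a $ b" using assms by (simp add: mat_def)
    finally show ?thesis .
  qed
  then show ?thesis unfolding unitary_def by (simp add: vec_eq_iff)
qed

lemma pmat_nth: "pmat \<tau> $ a $ b = (if b = \<tau> a then 1 else 0)"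
  by (simp add: pmat_def)

lemma pmat_left: "(pmat \<tau> ** U) $ a $ b = U $ (\<tau> a) $ b"
proof -
  have "(pmat \<tau> ** U) $ a $ b = (\<Sum>c\<in>UNIV. (if c = \<tau> a then 1 else 0) * U $ c $ b)"
    unfolding matrix_matrix_mult_def pmat_nth by simp
  then show ?thesis by (simp only: sum_delta_l) simp
qed

lemma pmat_right: assumes "\<And>a. \<tau> (\<tau> a) = a" shows "(U ** pmat \<tau>) $ a $ b = U $ a $ (\<tau> b)"
proof -
  have eq: "(b = \<tau> c) = (c = \<tau> b)" for b c using assms by metis
  have "(U ** pmat \<tau>) $ a $ b = (\<Sum>c\<in>UNIV. U $ a $ c * (if c = \<tau> b then 1 else 0))"
    unfolding matrix_matrix_mult_def pmat_nth by (simp add: eq)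
  then show ?thesis by (simp only: sum_delta_r) simp
qed

lemma pmat_unitary: assumes "\<And>a. \<tau> (\<tau> a) = a" shows "unitary (pmat \<tau>)"
proof -
  have eq: "(b = \<tau> c) = (c = \<tau> b)" for b c using assms by metis
  have inj: "(\<tau> a = \<tau> b) = (a = b)" for a b using assms by metis
  have "(adj (pmat \<tau>) ** pmat \<tau>) $ a $ b = mat 1 $ a $ b" for a b
  proof -
    have "(adj (pmat \<tau>) ** pmat \<tau>) $ a $ b = (\<Sum>c\<in>UNIV. (if c = \<tau> a then 1 else 0) * (if c = \<tau> b then 1 else 0))"
      unfolding matrix_matrix_mult_def by (simp add: pmat_nth eq cnj_if cong: if_cong)
    also have "\<dots> = 1 * (if \<tau> a = \<tau> b then 1 else 0)" by (rule sum_delta_l)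
    also have "\<dots> = mat 1 $ a $ b" by (simp add: mat_def inj)
    finally show ?thesis .
  qed
  then show ?thesis unfolding unitary_def by (simp add: vec_eq_iff)
qed

definition swp :: "'a \<Rightarrow> 'a \<Rightarrow> 'a \<Rightarrow> 'a" where
  "swp i k a = (if a = i then k else if a = k then i else a)"

lemma swp_inv: "swp i k (swp i k a) = a" by (simp add: swp_def)
lemma swp_i: "swp i k i = k" by (simp add: swp_def)

lemma mom_zero_left:
  assumes "haar \<mu>" "i \<noteq> k"
  shows "integral\<^sup>L \<mu> (\<lambda>U::('n::finite) op. U $ i $ j * cnj (U $ k $ l)) = 0"
proof -
  define s where "s a = (if a = i then -1 else (1::complex))" for a
  have u: "unitary (dmat s)" by (rule dmat_unitary) (simp add: s_def)
  have "integral\<^sup>L \<mu> (\<lambda>U::('n::finite) op. U $ i $ j * cnj (U $ k $ l))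
      = integral\<^sup>L \<mu> (\<lambda>U. (dmat s ** U) $ i $ j * cnj ((dmat s ** U) $ k $ l))"
    by (rule haar_inv_left[OF assms(1) u cont_entry2])
  also have "\<dots> = integral\<^sup>L \<mu> (\<lambda>U. - (U $ i $ j * cnj (U $ k $ l)))"
    using assms(2) by (simp add: dmat_left s_def)
  finally show ?thesis by simp
qed

lemma mom_zero_right:
  assumes "haar \<mu>" "j \<noteq> l"
  shows "integral\<^sup>L \<mu> (\<lambda>U::('n::finite) op. U $ i $ j * cnj (U $ k $ l)) = 0"
proof -
  define s where "s a = (if a = j then -1 else (1::complex))" for a
  have u: "unitary (dmat s)" by (rule dmat_unitary) (simp add: s_def)
  have "integral\<^sup>L \<mu> (\<lambda>U::('n::finite) op. U $ i $ j * cnj (U $ k $ l))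
      = integral\<^sup>L \<mu> (\<lambda>U. (U ** dmat s) $ i $ j * cnj ((U ** dmat s) $ k $ l))"
    by (rule haar_inv_right[OF assms(1) u cont_entry2])
  also have "\<dots> = integral\<^sup>L \<mu> (\<lambda>U. - (U $ i $ j * cnj (U $ k $ l)))"
    using assms(2) by (simp add: dmat_right s_def)
  finally show ?thesis by simp
qed

lemma mom_diag_rows:
  assumes "haar \<mu>"
  shows "integral\<^sup>L \<mu> (\<lambda>U::('n::finite) op. U $ i $ j * cnj (U $ i $ j))
       = integral\<^sup>L \<mu> (\<lambda>U::('n::finite) op. U $ k $ j * cnj (U $ k $ j))"
proof -
  have u: "unitary (pmat (swp i k))" by (rule pmat_unitary) (rule swp_inv)
  have "integral\<^sup>L \<mu> (\<lambda>U::('n::finite) op. U $ i $ j * cnj (U $ i $ j))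
      = integral\<^sup>L \<mu> (\<lambda>U. (pmat (swp i k) ** U) $ i $ j * cnj ((pmat (swp i k) ** U) $ i $ j))"
    by (rule haar_inv_left[OF assms(1) u cont_entry2])
  also have "\<dots> = integral\<^sup>L \<mu> (\<lambda>U::('n::finite) op. U $ k $ j * cnj (U $ k $ j))"
    by (simp add: pmat_left swp_i)
  finally show ?thesis .
qed

lemma mom_diag_cols:
  assumes "haar \<mu>"
  shows "integral\<^sup>L \<mu> (\<lambda>U::('n::finite) op. U $ i $ j * cnj (U $ i $ j))
       = integral\<^sup>L \<mu> (\<lambda>U::('n::finite) op. U $ i $ l * cnj (U $ i $ l))"
proof -
  have u: "unitary (pmat (swp j l))" by (rule pmat_unitary) (rule swp_inv)
  have "integral\<^sup>L \<mu> (\<lambda>U::('n::finite) op. U $ i $ j * cnj (U $ i $ j))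
      = integral\<^sup>L \<mu> (\<lambda>U. (U ** pmat (swp j l)) $ i $ j * cnj ((U ** pmat (swp j l)) $ i $ j))"
    by (rule haar_inv_right[OF assms(1) u cont_entry2])
  also have "\<dots> = integral\<^sup>L \<mu> (\<lambda>U::('n::finite) op. U $ i $ l * cnj (U $ i $ l))"
    by (simp add: pmat_right[OF swp_inv] swp_i)
  finally show ?thesis .
qed

lemma mom_diag:
  assumes "haar \<mu>"
  shows "integral\<^sup>L \<mu> (\<lambda>U::('n::finite) op. U $ i $ j * cnj (U $ i $ j)) = 1 / of_nat CARD('n)"
proof -
  interpret prob_space \<mu> using haar_prob[OF assms] .
  have "integral\<^sup>L \<mu> (\<lambda>U::('n::finite) op. \<Sum>k\<in>UNIV. U $ k $ j * cnj (U $ k $ j)) = integral\<^sup>L \<mu> (\<lambda>U. 1)"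
  proof (rule integral_cong_AE)
    show "(\<lambda>U::('n::finite) op. \<Sum>k\<in>UNIV. U $ k $ j * cnj (U $ k $ j)) \<in> borel_measurable \<mu>"
      by (rule haar_meas[OF assms]) (intro continuous_intros)
    show "(\<lambda>U::('n::finite) op. 1::complex) \<in> borel_measurable \<mu>" by simp
    show "AE U in \<mu>. (\<Sum>k\<in>UNIV. U $ k $ j * cnj (U $ k $ j)) = 1"
      using haar_AE_unitary[OF assms]
      by eventually_elim (drule unitary_col[of _ j], simp add: mult.commute)
  qed
  also have "\<dots> = 1" by (simp add: prob_space)
  finally have "(\<Sum>k\<in>UNIV. integral\<^sup>L \<mu> (\<lambda>U::('n::finite) op. U $ k $ j * cnj (U $ k $ j))) = 1"
    using Bochner_Integration.integral_sum[where I=UNIV and M=\<mu> and f="\<lambda>k U. U $ k $ j * cnj (U $ k $ j)", OF integrable_entry2[OF assms]]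
    by simp
  moreover have "(\<Sum>k\<in>UNIV. integral\<^sup>L \<mu> (\<lambda>U::('n::finite) op. U $ k $ j * cnj (U $ k $ j)))
     = of_nat CARD('n) * integral\<^sup>L \<mu> (\<lambda>U::('n::finite) op. U $ i $ j * cnj (U $ i $ j))"
  proof -
    have "(\<Sum>k\<in>UNIV. integral\<^sup>L \<mu> (\<lambda>U::('n::finite) op. U $ k $ j * cnj (U $ k $ j)))
        = (\<Sum>k\<in>(UNIV::'n set). integral\<^sup>L \<mu> (\<lambda>U::('n::finite) op. U $ i $ j * cnj (U $ i $ j)))"
      by (rule sum.cong[OF refl], rule mom_diag_rows[OF assms])
    then show ?thesis by simp
  qed
  ultimately show ?thesis by (simp add: field_simps)
qed

lemma moment:
  assumes "haar \<mu>"
  shows "integral\<^sup>L \<mu> (\<lambda>U::('n::finite) op. U $ i $ j * cnj (U $ k $ l))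
     = (if i = k \<and> j = l then 1 / of_nat CARD('n) else 0)"
  using mom_diag[OF assms] mom_zero_left[OF assms] mom_zero_right[OF assms] by auto



lemma bl_cscale: "bounded_linear (\<lambda>z::complex. z *# (E::('n::finite) op))"
  unfolding linear_conv_bounded_linear[symmetric]
  by (intro linearI) (simp_all add: vec_eq_iff algebra_simps)

lemma bl_entry: "bounded_linear (\<lambda>A::('n::finite) op. A $ p $ q)"
  unfolding linear_conv_bounded_linear[symmetric]
  by (intro linearI) simp_all

lemma mat_integrable:
  assumes "\<And>p q. integrable \<mu> (\<lambda>U. F U $ p $ q)"
  shows "integrable \<mu> (F :: _ \<Rightarrow> ('n::finite) op)"
proof -
  have i: "integrable \<mu> (\<lambda>U. F U $ p $ q *# emat p q)" for p q
    using Bochner_Integration.integrable_bounded_linear[OF bl_cscale[where E="emat p q"] assms[of p q]] by simp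
  have "integrable \<mu> (\<lambda>U. \<Sum>p\<in>UNIV. \<Sum>q\<in>UNIV. F U $ p $ q *# emat p q)"
    by (intro Bochner_Integration.integrable_sum i)
  moreover have "(\<lambda>U. \<Sum>p\<in>UNIV. \<Sum>q\<in>UNIV. F U $ p $ q *# emat p q) = F"
    by (rule ext) (rule mat_expand[symmetric])
  ultimately show ?thesis by simp
qed

lemma mat_integral_nth:
  assumes "integrable \<mu> (F :: _ \<Rightarrow> ('n::finite) op)"
  shows "(integral\<^sup>L \<mu> F) $ p $ q = integral\<^sup>L \<mu> (\<lambda>U. F U $ p $ q)"
  using integral_bounded_linear[OF bl_entry assms] by simp

lemma entry_expand:
  assumes "clinear_sop L"
  shows "(L U ** adj U) $ p $ q = (\<Sum>r\<in>UNIV. \<Sum>i\<in>UNIV. \<Sum>j\<in>UNIV. L (emat i j) $ p $ r * (U $ i $ j * cnj (U $ q $ r)))"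
proof -
  have "(L U ** adj U) $ p $ q = (\<Sum>r\<in>UNIV. (L U) $ p $ r * cnj (U $ q $ r))"
    by (simp add: matrix_matrix_mult_def)
  also have "\<dots> = (\<Sum>r\<in>UNIV. (\<Sum>i\<in>UNIV. \<Sum>j\<in>UNIV. U $ i $ j * L (emat i j) $ p $ r) * cnj (U $ q $ r))"
    by (subst clin_expand[OF assms, of U]) simp
  also have "\<dots> = (\<Sum>r\<in>UNIV. \<Sum>i\<in>UNIV. \<Sum>j\<in>UNIV. L (emat i j) $ p $ r * (U $ i $ j * cnj (U $ q $ r)))"
    by (simp add: sum_distrib_right sum_distrib_left mult_ac)
  finally show ?thesis .
qed

lemma entry_integrable:
  assumes "haar \<mu>" "clinear_sop L"
  shows "integrable \<mu> (\<lambda>U. (L U ** adj U) $ p $ q)"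
  unfolding entry_expand[OF assms(2)]
  by (intro Bochner_Integration.integrable_sum Bochner_Integration.integrable_mult_right integrable_entry2[OF assms(1)])

lemma int_integrable:
  assumes "haar \<mu>" "clinear_sop L"
  shows "integrable \<mu> (\<lambda>U. L U ** adj U)"
  by (rule mat_integrable) (rule entry_integrable[OF assms])

lemma int_formula:
  fixes L :: "('n::finite) sop"
  assumes "haar \<mu>" "clinear_sop L"
  shows "(integral\<^sup>L \<mu> (\<lambda>U. L U ** adj U)) $ p $ q = (\<Sum>r\<in>UNIV. L (emat q r) $ p $ r) / of_nat CARD('n::finite)"
proof -
  have "(integral\<^sup>L \<mu> (\<lambda>U. L U ** adj U)) $ p $ q = integral\<^sup>L \<mu> (\<lambda>U. (L U ** adj U) $ p $ q)"
    by (rule mat_integral_nth[OF int_integrable[OF assms]])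
  also have "\<dots> = (\<Sum>r\<in>UNIV. \<Sum>i\<in>UNIV. \<Sum>j\<in>UNIV. L (emat i j) $ p $ r *
       integral\<^sup>L \<mu> (\<lambda>U::'n op. U $ i $ j * cnj (U $ q $ r)))"
    unfolding entry_expand[OF assms(2)]
    by (simp add: integrable_entry2[OF assms(1)] Bochner_Integration.integral_sum Bochner_Integration.integrable_sum Bochner_Integration.integrable_mult_right)
  also have "\<dots> = (\<Sum>r\<in>UNIV. \<Sum>i\<in>UNIV. \<Sum>j\<in>UNIV. if i = q \<and> j = r then L (emat q r) $ p $ r / of_nat CARD('n) else 0)"
    unfolding moment[OF assms(1)] by (intro sum.cong refl) auto
  also have "\<dots> = (\<Sum>r\<in>UNIV. L (emat q r) $ p $ r / of_nat CARD('n))"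
    by (intro sum.cong refl) (rule double_delta)
  finally show ?thesis by (simp add: sum_divide_distrib)
qed



lemma Re_cinner: "Re (cinner x y) = x \<bullet> y"
  unfolding cinner_def inner_vec_def inner_complex_def by (simp add: Re_sum)

lemma cinner_adj: "cinner x (A *v y) = cinner (adj A *v x) y"
proof -
  have "cinner x (A *v y) = (\<Sum>i\<in>UNIV. \<Sum>j\<in>UNIV. cnj (x $ i) * A $ i $ j * y $ j)"
    unfolding cinner_def matrix_vector_mult_def by (simp add: sum_distrib_left mult_ac)
  also have "\<dots> = (\<Sum>j\<in>UNIV. \<Sum>i\<in>UNIV. cnj (x $ i) * A $ i $ j * y $ j)"
    by (rule sum.swap)
  also have "\<dots> = cinner (adj A *v x) y"
    unfolding cinner_def matrix_vector_mult_def by (simp add: sum_distrib_right sum_distrib_left mult_ac)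
  finally show ?thesis .
qed

lemma cinner_cnj: "cnj (cinner x y) = cinner y x"
  unfolding cinner_def by (simp add: mult.commute)

lemma herm_sym: "hermitian A \<Longrightarrow> x \<bullet> (A *v y) = (A *v x) \<bullet> y"
  by (metis Re_cinner cinner_adj hermitian_def)

lemma herm_real: "hermitian A \<Longrightarrow> Im (cinner x (A *v x)) = 0"
proof -
  assume h: "hermitian A"
  have "cnj (cinner x (A *v x)) = cinner x (A *v x)"
    by (metis cinner_adj cinner_cnj h hermitian_def)
  then have "Im (cnj (cinner x (A *v x))) = Im (cinner x (A *v x))" by simp
  then show ?thesis by simp
qed

lemma cinner_self: "cinner x x = of_real ((norm x)^2)"
proof -
  have "Im (cinner x x) = 0" unfolding cinner_def by (simp add: Im_sum)
  moreover have "Re (cinner x x) = (norm x)^2" by (simp add: Re_cinner power2_norm_eq_inner)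
  ultimately show ?thesis by (simp add: complex_eq_iff)
qed

lemma mv_scaleR: "(A::('n::finite) op) *v (r *\<^sub>R x) = r *\<^sub>R (A *v x)"
  by (simp add: vec_eq_iff matrix_vector_mult_def scaleR_sum_right)

lemma cscale_mv: "(c *# A) *v x = (\<chi> i. c * (A *v x) $ i)"
  by (simp add: vec_eq_iff matrix_vector_mult_def sum_distrib_left mult_ac)

lemma norm_cmult_vec: "norm (\<chi> i. c * (y::complex^'n::finite) $ i) = cmod c * norm y"
  unfolding norm_vec_def by (simp add: norm_mult L2_set_right_distrib)

lemma opnorm_mv: "norm (A *v x) \<le> opnorm A * norm x"
  unfolding opnorm_def by (rule onorm[OF matrix_vector_mul_bounded_linear])

lemma opnorm_nonneg: "0 \<le> opnorm A"
  unfolding opnorm_def by (rule onorm_pos_le[OF matrix_vector_mul_bounded_linear])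

lemma opnorm_le: "0 \<le> b \<Longrightarrow> (\<And>x. norm (A *v x) \<le> b * norm x) \<Longrightarrow> opnorm A \<le> b"
  unfolding opnorm_def by (rule onorm_bound)

lemma opnorm_mult: "opnorm (A ** B) \<le> opnorm A * opnorm B"
proof (rule opnorm_le)
  show "0 \<le> opnorm A * opnorm B" by (simp add: opnorm_nonneg)
  fix x
  have "norm ((A ** B) *v x) = norm (A *v (B *v x))" by (simp add: matrix_vector_mul_assoc)
  also have "\<dots> \<le> opnorm A * norm (B *v x)" by (rule opnorm_mv)
  also have "\<dots> \<le> opnorm A * (opnorm B * norm x)"
    by (rule mult_left_mono[OF opnorm_mv opnorm_nonneg])
  finally show "norm ((A ** B) *v x) \<le> opnorm A * opnorm B * norm x" by (simp add: mult_ac)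
qed

lemma opnorm_add: "opnorm (A + B) \<le> opnorm A + opnorm B"
proof (rule opnorm_le)
  show "0 \<le> opnorm A + opnorm B" by (simp add: opnorm_nonneg)
  fix x
  have "norm ((A + B) *v x) \<le> norm (A *v x) + norm (B *v x)"
    by (simp add: matrix_vector_mult_add_rdistrib norm_triangle_ineq)
  also have "\<dots> \<le> opnorm A * norm x + opnorm B * norm x" by (intro add_mono opnorm_mv)
  finally show "norm ((A + B) *v x) \<le> (opnorm A + opnorm B) * norm x" by (simp add: algebra_simps)
qed

lemma opnorm_cscale: "opnorm (c *# A) \<le> cmod c * opnorm A"
proof (rule opnorm_le)
  show "0 \<le> cmod c * opnorm A" by (simp add: opnorm_nonneg)
  fix x
  have "norm ((c *# A) *v x) = cmod c * norm (A *v x)" by (simp add: cscale_mv norm_cmult_vec)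
  also have "\<dots> \<le> cmod c * (opnorm A * norm x)" by (rule mult_left_mono[OF opnorm_mv]) simp
  finally show "norm ((c *# A) *v x) \<le> cmod c * opnorm A * norm x" by (simp add: mult_ac)
qed

lemma opnorm_neg: "opnorm (- A) \<le> opnorm A"
  using opnorm_cscale[of "-1" A] by (simp add: cscale_minus1)

lemma opnorm_diff: "opnorm (A - B) \<le> opnorm A + opnorm B"
  using opnorm_add[of A "-B"] opnorm_neg[of B] by simp

lemma opnorm_zero: "opnorm (0::('n::finite) op) = 0"
  by (rule antisym[OF opnorm_le opnorm_nonneg]) simp_all

lemma opnorm_sum: "opnorm (sum f S) \<le> (\<Sum>x\<in>S. opnorm (f x))"
proof (induction S rule: infinite_finite_induct)
  case (insert x F)
  then show ?case using opnorm_add[of "f x" "sum f F"] by simp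
qed (simp_all add: opnorm_zero)

lemma norm_ev: "norm (ev j :: complex^'n::finite) = 1"
proof -
  have "(\<Sum>i\<in>(UNIV::'n set). (norm (ev j $ i))^2) = (\<Sum>i\<in>(UNIV::'n set). if i = j then 1 else 0)"
    by (intro sum.cong) auto
  then show ?thesis unfolding norm_vec_def L2_set_def by simp
qed

lemma entry_le_opnorm: "cmod (A $ i $ j) \<le> opnorm A"
proof -
  have "(A *v ev j) $ i = A $ i $ j"
  proof -
    have "(A *v ev j) $ i = (\<Sum>k\<in>UNIV. A $ i $ k * (if k = j then 1 else 0))"
      by (simp add: matrix_vector_mult_def)
    also have "\<dots> = A $ i $ j" by (simp only: sum_delta_r) simp
    finally show ?thesis .
  qed
  then have "cmod (A $ i $ j) \<le> norm (A *v ev j)" using Finite_Cartesian_Product.norm_nth_le[where x="A *v ev j" and i=i] by simp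
  also have "\<dots> \<le> opnorm A" using opnorm_mv[of A "ev j"] by (simp add: norm_ev)
  finally show ?thesis .
qed

lemma adj_adj: "adj (adj A) = A" by (simp add: vec_eq_iff)

lemma unitary_adj: "unitary U \<Longrightarrow> unitary (adj U)"
  unfolding unitary_def adj_adj using matrix_left_right_inverse by blast

lemma unitary_norm: "unitary U \<Longrightarrow> norm (U *v x) = norm x"
proof -
  assume u: "unitary U"
  have "(U *v x) \<bullet> (U *v x) = x \<bullet> x"
    by (metis Re_cinner cinner_adj matrix_vector_mul_assoc matrix_vector_mul_lid u unitary_def)
  then show ?thesis by (simp add: norm_eq_sqrt_inner)
qed

lemma unitary_opnorm: "unitary U \<Longrightarrow> opnorm U \<le> 1"
  by (rule opnorm_le) (simp_all add: unitary_norm)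

lemma sop_bdd:
  fixes L :: "('n::finite) sop"
  assumes "clinear_sop L"
  shows "bdd_above ((\<lambda>A. opnorm (L A)) ` {A. opnorm A \<le> 1})"
proof (rule bdd_aboveI2)
  fix A :: "('n::finite) op" assume "A \<in> {A. opnorm A \<le> 1}"
  then have a: "opnorm A \<le> 1" by simp
  have "opnorm (L A) \<le> (\<Sum>i\<in>UNIV. opnorm (\<Sum>j\<in>UNIV. A $ i $ j *# L (emat i j)))"
    unfolding clin_expand[OF assms, of A] by (rule opnorm_sum)
  also have "\<dots> \<le> (\<Sum>i\<in>UNIV. \<Sum>j\<in>UNIV. opnorm (A $ i $ j *# L (emat i j)))"
    by (intro sum_mono opnorm_sum)
  also have "\<dots> \<le> (\<Sum>i\<in>UNIV. \<Sum>j\<in>UNIV. cmod (A $ i $ j) * opnorm (L (emat i j)))"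
    by (intro sum_mono opnorm_cscale)
  also have "\<dots> \<le> (\<Sum>i\<in>UNIV. \<Sum>j\<in>UNIV. opnorm (L (emat i j)))"
    by (intro sum_mono mult_left_le_one_le opnorm_nonneg norm_ge_zero order.trans[OF entry_le_opnorm a])
  finally show "opnorm (L A) \<le> (\<Sum>i\<in>UNIV. \<Sum>j\<in>UNIV. opnorm (L (emat i j)))" .
qed

lemma sopnorm_ge: "clinear_sop L \<Longrightarrow> opnorm A \<le> 1 \<Longrightarrow> opnorm (L A) \<le> sopnorm L"
  unfolding sopnorm_def by (rule cSUP_upper) (auto simp: sop_bdd)

lemma sopnorm_le: fixes L :: "('n::finite) sop" shows "(\<And>A. opnorm A \<le> 1 \<Longrightarrow> opnorm (L A) \<le> c) \<Longrightarrow> sopnorm L \<le> c"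
  unfolding sopnorm_def
proof (rule cSUP_least)
  have "(0::'n op) \<in> {A. opnorm A \<le> 1}" by (simp add: opnorm_zero)
  then show "{A::'n op. opnorm A \<le> 1} \<noteq> {}" by blast
qed auto



lemma series_deriv_nonpos:
  fixes b :: "nat \<Rightarrow> real" and B C :: real
  assumes bound: "\<And>k. \<bar>b k\<bar> \<le> B * C ^ k" and B: "0 \<le> B" and C: "0 \<le> C"
    and ineq: "\<And>t. 0 < t \<Longrightarrow> t \<le> 1 \<Longrightarrow> (\<Sum>k. (t ^ k / fact k) * b k) \<le> b 0"
  shows "b 1 \<le> 0"
proof -
  define g2 where "g2 n = B * (inverse (fact (n + 2)) * C ^ (n + 2))" for n
  have "summable (\<lambda>n. inverse (fact (n+2)) * C^(n+2))"
    using summable_ignore_initial_segment[OF summable_exp[of C], of 2] by simp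
  then have sg2: "summable g2"
    unfolding g2_def by (rule summable_mult)
  define S where "S = suminf g2"
  have g2nn: "0 \<le> g2 n" for n unfolding g2_def using B C by simp
  have S0: "0 \<le> S" unfolding S_def by (rule suminf_nonneg[OF sg2 g2nn])
  have key: "b 1 \<le> t * S" if t0: "0 < t" and t1: "t \<le> 1" for t
  proof -
    define f where "f k = (t ^ k / fact k) * b k" for k
    have fb: "norm (f k) \<le> B * (inverse (fact k) * (t * C) ^ k)" for k
    proof -
      have "norm (f k) = (t ^ k / fact k) * \<bar>b k\<bar>" unfolding f_def using t0 by (simp add: abs_mult)
      also have "\<dots> \<le> (t ^ k / fact k) * (B * C ^ k)" using bound t0 by (intro mult_left_mono) auto
      also have "\<dots> = B * (inverse (fact k) * (t * C) ^ k)" by (simp add: power_mult_distrib field_simps)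
      finally show ?thesis .
    qed
    have sf: "summable f"
      by (rule summable_comparison_test[OF _ summable_mult[OF summable_exp]]) (use fb in blast)
    have low: "- (t^2 * g2 n) \<le> f (n + 2)" for n
    proof -
      have e: "\<bar>f (n + 2)\<bar> = (t ^ (n + 2) / fact (n + 2)) * \<bar>b (n + 2)\<bar>"
        unfolding f_def abs_mult using t0 by (subst abs_of_nonneg) auto
      have "\<bar>f (n + 2)\<bar> \<le> (t ^ (n + 2) / fact (n + 2)) * (B * C ^ (n + 2))"
        unfolding e by (rule mult_left_mono[OF bound]) (use t0 in auto)
      also have "\<dots> \<le> (t ^ 2 / fact (n + 2)) * (B * C ^ (n + 2))"
        using t0 t1 B C by (intro mult_right_mono divide_right_mono power_decreasing) auto
      also have "\<dots> = t^2 * g2 n" unfolding g2_def by (simp add: field_simps)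
      finally show ?thesis by linarith
    qed
    have "(\<Sum>n. - (t^2 * g2 n)) \<le> (\<Sum>n. f (n + 2))"
      by (rule suminf_le[OF low]) (simp_all only: summable_minus summable_mult sg2 summable_ignore_initial_segment[OF sf])
    then have l2: "- (t^2 * S) \<le> (\<Sum>n. f (n + 2))"
      unfolding S_def by (simp add: suminf_minus summable_mult sg2 suminf_mult)
    have "suminf f = (\<Sum>n. f (n + 2)) + (\<Sum>i<2. f i)" by (rule suminf_split_initial_segment[OF sf])
    also have "(\<Sum>i<2. f i) = b 0 + t * b 1" by (simp add: f_def numeral_2_eq_2)
    finally have "b 0 + t * b 1 - t^2 * S \<le> suminf f" using l2 by linarith
    moreover have "suminf f \<le> b 0" unfolding f_def by (rule ineq[OF t0 t1])
    ultimately have "t * b 1 \<le> t * (t * S)" by (simp add: power2_eq_square)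
    then show ?thesis using t0 by simp
  qed
  show ?thesis
  proof (rule ccontr)
    assume "\<not> b 1 \<le> 0"
    then have bp: "0 < b 1" by simp
    define t where "t = min 1 (b 1 / (2 * (S + 1)))"
    have t0: "0 < t" unfolding t_def using bp S0 by simp
    have t1: "t \<le> 1" unfolding t_def by simp
    have "b 1 \<le> t * S" by (rule key[OF t0 t1])
    also have "\<dots> \<le> b 1 / (2 * (S + 1)) * S" unfolding t_def using S0 by (intro mult_right_mono) auto
    also have "\<dots> < b 1"
    proof -
      have "b 1 / (2 * (S + 1)) * S = b 1 * (S / (2 * (S + 1)))" by simp
      also have "\<dots> < b 1 * 1" using bp S0 by (intro mult_strict_left_mono) (auto simp: field_simps)
      finally show ?thesis by simp
    qed
    finally show False by simp
  qed
qed

lemma cscale_real: "of_real r *# A = r *\<^sub>R (A::('n::finite) op)"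
  by (simp add: vec_eq_iff of_real_def)

lemma clin_scaleR: "clinear_sop L \<Longrightarrow> L (r *\<^sub>R A) = r *\<^sub>R L A"
  by (metis cscale_real clin_scale)

lemma clin_linear: "clinear_sop L \<Longrightarrow> linear L"
  by (intro linearI) (simp_all add: clin_add clin_scaleR)

lemma tr_add: "tr (A + B) = tr A + tr B"
  by (simp add: tr_def sum.distrib)

lemma tr_scaleR: "tr (r *\<^sub>R A) = r *\<^sub>R tr A"
  by (simp add: tr_def scaleR_sum_right)

lemma tr_bl: "bounded_linear (tr :: ('n::finite) op \<Rightarrow> complex)"
  unfolding linear_conv_bounded_linear[symmetric]
  by (intro linearI) (simp_all add: tr_add tr_scaleR)

lemma tr_bound: "cmod (tr (A::('n::finite) op)) \<le> of_nat CARD('n) * norm A"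
proof -
  have "cmod (tr A) \<le> (\<Sum>i\<in>UNIV. cmod (A $ i $ i))" unfolding tr_def by (rule norm_sum)
  also have "\<dots> \<le> (\<Sum>i\<in>(UNIV::'n set). norm A)"
  proof (rule sum_mono)
    fix i :: 'n
    have "cmod (A $ i $ i) \<le> norm (A $ i)" by (rule Finite_Cartesian_Product.norm_nth_le)
    also have "\<dots> \<le> norm A" by (rule Finite_Cartesian_Product.norm_nth_le)
    finally show "cmod (A $ i $ i) \<le> norm A" .
  qed
  finally show ?thesis by simp
qed

lemma tni_trace:
  fixes L :: "('n::finite) sop"
  assumes clin: "clinear_sop L" and tni: "trace_nonincreasing L" and rho: "psd \<rho>"
  shows "Re (tr (L \<rho>)) \<le> 0"
proof -
  have bl: "bounded_linear L" using clin_linear[OF clin] linear_conv_bounded_linear by blast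
  obtain K where K0: "K > 0" and K: "\<And>x. norm (L x) \<le> norm x * K"
    using bounded_linear.pos_bounded[OF bl] by blast
  have pow: "((\<lambda>A. of_real t *# L A) ^^ k) A = t ^ k *\<^sub>R (L ^^ k) A" for t k A
    by (induction k) (simp_all add: cscale_real clin_scaleR[OF clin])
  have npow: "norm ((L ^^ k) \<rho>) \<le> K ^ k * norm \<rho>" for k
  proof (induction k)
    case (Suc k)
    have "norm ((L ^^ Suc k) \<rho>) \<le> norm ((L ^^ k) \<rho>) * K" using K by simp
    also have "\<dots> \<le> K ^ k * norm \<rho> * K" using Suc K0 by (intro mult_right_mono) auto
    finally show ?case by (simp add: mult_ac)
  qed simp
  define b where "b k = Re (tr ((L ^^ k) \<rho>))" for k
  define B where "B = of_nat CARD('n) * norm \<rho>"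
  have bound: "\<bar>b k\<bar> \<le> B * K ^ k" for k
  proof -
    have "\<bar>b k\<bar> \<le> cmod (tr ((L ^^ k) \<rho>))" unfolding b_def by (rule abs_Re_le_cmod)
    also have "\<dots> \<le> of_nat CARD('n) * norm ((L ^^ k) \<rho>)" by (rule tr_bound)
    also have "\<dots> \<le> of_nat CARD('n) * (K ^ k * norm \<rho>)" by (intro mult_left_mono npow) simp
    finally show ?thesis by (simp add: B_def mult_ac)
  qed
  have blRt: "bounded_linear (\<lambda>A::'n op. Re (tr A))"
    using bounded_linear_compose[OF bounded_linear_Re tr_bl] by (simp add: o_def)
  have ineq: "(\<Sum>k. (t ^ k / fact k) * b k) \<le> b 0" if t0: "0 < t" and t1: "t \<le> 1" for t
  proof -
    define X where "X k = (1 / fact k) *\<^sub>R (t ^ k *\<^sub>R (L ^^ k) \<rho>)" for k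
    have se: "sexp (\<lambda>A. of_real t *# L A) \<rho> = suminf X"
      unfolding sexp_def X_def pow ..
    have "norm (X k) \<le> norm \<rho> * (inverse (fact k) * (t * K) ^ k)" for k
    proof -
      have "norm (X k) = (t ^ k / fact k) * norm ((L ^^ k) \<rho>)" unfolding X_def using t0 by simp
      also have "\<dots> \<le> (t ^ k / fact k) * (K ^ k * norm \<rho>)" using t0 by (intro mult_left_mono npow) auto
      also have "\<dots> = norm \<rho> * (inverse (fact k) * (t * K) ^ k)" by (simp add: power_mult_distrib field_simps)
      finally show ?thesis .
    qed
    then have sX: "summable X"
      by (intro summable_comparison_test[OF _ summable_mult[OF summable_exp]]) blast
    have "Re (tr (suminf X)) = (\<Sum>k. Re (tr (X k)))"
      by (rule bounded_linear.suminf[OF blRt sX])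
    also have "\<dots> = (\<Sum>k. (t ^ k / fact k) * b k)"
      unfolding X_def b_def by (simp add: tr_scaleR)
    finally have e: "Re (tr (sexp (\<lambda>A. of_real t *# L A) \<rho>)) = (\<Sum>k. (t ^ k / fact k) * b k)"
      unfolding se .
    have "tr (sexp (\<lambda>A. of_real t *# L A) \<rho>) \<le> tr \<rho>"
      using tni rho t0 unfolding trace_nonincreasing_def by simp
    then have "Re (tr (sexp (\<lambda>A. of_real t *# L A) \<rho>)) \<le> Re (tr \<rho>)"
      by (simp add: less_eq_complex_def)
    then show ?thesis unfolding e by (simp add: b_def)
  qed
  have "b 1 \<le> 0"
    by (rule series_deriv_nonpos[OF bound _ _ ineq]) (use K0 in \<open>simp_all add: B_def\<close>)
  then show ?thesis by (simp add: b_def)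
qed



lemma numrad:
  assumes h: "hermitian A" and w: "0 \<le> w" and b: "\<And>x. \<bar>x \<bullet> (A *v x)\<bar> \<le> w * (norm x)^2"
  shows "opnorm A \<le> w"
proof (rule opnorm_le[OF w])
  fix x
  show "norm (A *v x) \<le> w * norm x"
  proof (cases "A *v x = 0")
    case True then show ?thesis using w by simp
  next
    case False
    define y where "y = (norm x / norm (A *v x)) *\<^sub>R (A *v x)"
    have nAx: "norm (A *v x) > 0" using False by simp
    have ny: "norm y = norm x" unfolding y_def using nAx by simp
    have yAx: "y \<bullet> (A *v x) = norm x * norm (A *v x)"
      unfolding y_def using nAx by (simp add: power2_norm_eq_inner[symmetric] power2_eq_square)
    have sym: "x \<bullet> (A *v y) = y \<bullet> (A *v x)"
      using herm_sym[OF h, of x y] by (simp add: inner_commute)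
    have pol: "(x + y) \<bullet> (A *v (x + y)) - (x - y) \<bullet> (A *v (x - y)) = 4 * (y \<bullet> (A *v x))"
      using sym by (simp add: matrix_vector_right_distrib matrix_vector_mult_diff_distrib inner_add_left inner_add_right inner_diff_left inner_diff_right algebra_simps)
    have "4 * (y \<bullet> (A *v x)) \<le> w * (norm (x + y))^2 + w * (norm (x - y))^2"
      using b[of "x + y"] b[of "x - y"] pol by linarith
    also have "\<dots> = w * (2 * (norm x)^2 + 2 * (norm y)^2)"
      by (simp add: power2_norm_eq_inner inner_add_left inner_add_right inner_diff_left inner_diff_right inner_commute algebra_simps)
    also have "\<dots> = 4 * (w * norm x * norm x)" using ny by (simp add: power2_eq_square algebra_simps)
    finally have "norm x * norm (A *v x) \<le> norm x * (w * norm x)" using yAx by (simp add: mult_ac)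
    moreover have "norm x > 0" using False by (metis matrix_vector_mult_0_right zero_less_norm_iff)
    ultimately show ?thesis by simp
  qed
qed

lemma cscale_add: "c *# (A + B) = c *# A + c *# (B::('n::finite) op)"
  by (simp add: vec_eq_iff algebra_simps)
lemma cscale_diff: "c *# (A - B) = c *# A - c *# (B::('n::finite) op)"
  by (simp add: vec_eq_iff algebra_simps)
lemma cscale_cscale: "c *# (d *# A) = (c * d) *# (A::('n::finite) op)"
  by (simp add: vec_eq_iff)
lemma mult_cscale_l: "(c *# A) ** B = c *# (A ** (B::('n::finite) op))"
  by (simp add: vec_eq_iff matrix_matrix_mult_def sum_distrib_left mult_ac)
lemma mult_cscale_r: "A ** (c *# B) = c *# (A ** (B::('n::finite) op))"
  by (simp add: vec_eq_iff matrix_matrix_mult_def sum_distrib_left mult_ac)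

lemma matrix_add_rdistrib': "((B + C) ** A) = (B ** A) + (C ** (A::('n::finite) op))"
  by (simp add: vec_eq_iff matrix_matrix_mult_def sum.distrib distrib_right)

lemma L_clin:
  assumes "clinear_sop \<Psi>"
  shows "clinear_sop (\<lambda>\<rho>::('n::finite) op. \<Psi> \<rho> - (G ** \<rho> + \<rho> ** G) - \<i> *# (H ** \<rho> - \<rho> ** H))"
  unfolding clinear_sop_def
  by (simp add: clin_add[OF assms] clin_scale[OF assms] matrix_add_ldistrib matrix_add_rdistrib'
      mult_cscale_l mult_cscale_r cscale_add cscale_diff cscale_cscale algebra_simps)

lemma mult_emat_r: "(A ** emat q r) $ a $ b = (if b = r then A $ a $ q else 0)"
proof (cases "b = r")
  case True
  then have "(A ** emat q r) $ a $ b = (\<Sum>k\<in>UNIV. A $ a $ k * (if k = q then 1 else 0))"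
    unfolding matrix_matrix_mult_def by simp
  then show ?thesis using True by (simp only: sum_delta_r) simp
qed (simp add: matrix_matrix_mult_def)

lemma mult_emat_l: "(emat q r ** A) $ a $ b = (if a = q then A $ r $ b else 0)"
proof (cases "a = q")
  case True
  then have "(emat q r ** A) $ a $ b = (\<Sum>k\<in>UNIV. (if k = r then 1 else 0) * A $ k $ b)"
    unfolding matrix_matrix_mult_def by simp
  then show ?thesis using True by (simp only: sum_delta_l) simp
qed (simp add: matrix_matrix_mult_def)

lemma sum_emat_r: "(\<Sum>r\<in>UNIV. (A ** emat q r) $ p $ r) = of_nat CARD('n) * A $ p $ (q::'n::finite)"
  by (simp add: mult_emat_r)

lemma sum_emat_l: "(\<Sum>r\<in>UNIV. (emat q r ** A) $ p $ r) = (if p = q then tr A else 0)"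
  by (simp add: mult_emat_l tr_def)

lemma first_conj:
  fixes \<L> \<Psi> :: "('n::finite) sop" and G H :: "'n op" and \<mu> :: "'n op measure"
  assumes pres: "\<And>\<rho>. \<L> \<rho> = \<Psi> \<rho> - (G ** \<rho> + \<rho> ** G) - \<i> *# (H ** \<rho> - \<rho> ** H)"
    and clin: "clinear_sop \<Psi>"
    and supp: "supported_trace_zero (jam \<Psi>)"
    and trH: "tr H = 0"
    and haar: "haar \<mu>"
  shows "integral\<^sup>L \<mu> (\<lambda>U. \<L> U ** adj U)
           = - G - (tr G / of_nat CARD('n)) *# mat 1 - \<i> *# H"
proof -
  have Leq: "\<L> = (\<lambda>\<rho>. \<Psi> \<rho> - (G ** \<rho> + \<rho> ** G) - \<i> *# (H ** \<rho> - \<rho> ** H))"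
    using pres by (rule ext)
  have cL: "clinear_sop \<L>" unfolding Leq by (rule L_clin[OF clin])
  define d :: complex where "d = of_nat CARD('n)"
  have d0: "d \<noteq> 0" unfolding d_def by simp
  show ?thesis
  proof (subst vec_eq_iff, intro allI, subst vec_eq_iff, intro allI)
    fix p q
    have "(integral\<^sup>L \<mu> (\<lambda>U. \<L> U ** adj U)) $ p $ q = (\<Sum>r\<in>UNIV. \<L> (emat q r) $ p $ r) / d"
      unfolding d_def by (rule int_formula[OF haar cL])
    also have "(\<Sum>r\<in>UNIV. \<L> (emat q r) $ p $ r) =
       (\<Sum>r\<in>UNIV. \<Psi> (emat q r) $ p $ r) - ((\<Sum>r\<in>(UNIV::'n set). G $ p $ q) + (if p = q then tr G else 0))
       - \<i> * ((\<Sum>r\<in>(UNIV::'n set). H $ p $ q) - (if p = q then tr H else 0))"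
      unfolding pres by (simp add: sum_subtractf sum.distrib sum_distrib_left[symmetric] sum_emat_r sum_emat_l)
    also have "\<dots> = - (d * G $ p $ q + (if p = q then tr G else 0)) - \<i> * (d * H $ p $ q)"
      using jam_psi_part[OF clin supp, of q p] trH by (simp add: d_def)
    finally have e: "(integral\<^sup>L \<mu> (\<lambda>U. \<L> U ** adj U)) $ p $ q
       = (- (d * G $ p $ q + (if p = q then tr G else 0)) - \<i> * (d * H $ p $ q)) / d" .
    have r: "(- G - (tr G / of_nat CARD('n)) *# mat 1 - \<i> *# H) $ p $ q
       = - G $ p $ q - (tr G / d) * (if p = q then 1 else 0) - \<i> * H $ p $ q"
      by (simp add: mat_def d_def)
    show "(integral\<^sup>L \<mu> (\<lambda>U. \<L> U ** adj U)) $ p $ q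
        = (- G - (tr G / of_nat CARD('n)) *# mat 1 - \<i> *# H) $ p $ q"
      unfolding e r using d0 by (cases "p = q") (simp_all add: field_simps)
  qed
qed



lemma ket_bra_mv: "ket_bra k h *v y = (\<chi> i. k $ i * cinner h y)"
  by (simp add: vec_eq_iff matrix_vector_mult_def cinner_def sum_distrib_left mult_ac)

lemma cinner_cmult_right: "cinner y (\<chi> i. c * k $ i) = c * cinner y k"
  by (simp add: cinner_def sum_distrib_left mult_ac)

lemma psd_ket_bra: "psd (ket_bra x x)"
  unfolding psd_def
proof
  fix y
  have "cinner y (ket_bra x x *v y) = cnj (cinner x y) * cinner x y"
    by (simp add: ket_bra_mv cinner_cmult_right cinner_cnj mult.commute)
  also have "\<dots> = of_real ((cmod (cinner x y))^2)"
    by (metis complex_norm_square mult.commute of_real_power)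
  finally show "0 \<le> cinner y (ket_bra x x *v y)" by (simp add: less_eq_complex_def)
qed

lemma cp_psd:
  assumes cp: "completely_positive \<Psi>" and p: "psd \<rho>"
  shows "psd (\<Psi> \<rho>)"
proof -
  have "block_psd 1 (\<lambda>j k. \<rho>)"
    unfolding block_psd_def using p by (simp add: psd_def)
  then have "block_psd 1 (\<lambda>j k. \<Psi> \<rho>)"
    using cp unfolding completely_positive_def by auto
  then show ?thesis unfolding block_psd_def psd_def
    by (auto dest: spec[where x="\<lambda>_. _"])
qed

lemma cinner_ev: "cinner (ev i) (P *v ev i) = P $ i $ i"
proof -
  have "cinner (ev i) (P *v ev i) = (\<Sum>k\<in>UNIV. (if k = i then 1 else 0) * (P *v ev i) $ k)"
    unfolding cinner_def by (intro sum.cong) auto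
  also have "\<dots> = (P *v ev i) $ i" by (simp only: sum_delta_l) simp
  also have "\<dots> = (\<Sum>k\<in>UNIV. P $ i $ k * (if k = i then 1 else 0))"
    by (simp add: matrix_vector_mult_def)
  also have "\<dots> = P $ i $ i" by (simp only: sum_delta_r) simp
  finally show ?thesis .
qed

lemma psd_diag: "psd P \<Longrightarrow> 0 \<le> Re (P $ i $ i) \<and> Im (P $ i $ i) = 0"
  unfolding psd_def by (metis cinner_ev less_eq_complex_def zero_complex.sel)

lemma psd_tr: "psd P \<Longrightarrow> 0 \<le> Re (tr P)"
  unfolding tr_def by (simp add: Re_sum sum_nonneg psd_diag)

lemma tr_diff: "tr (A - B) = tr A - tr B" by (simp add: tr_def sum_subtractf)
lemma tr_cscale: "tr (c *# A) = c * tr A" by (simp add: tr_def sum_distrib_left)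

lemma tr_mult_kb: "tr (A ** ket_bra x x) = cinner x (A *v x)"
  unfolding tr_def cinner_def matrix_matrix_mult_def matrix_vector_mult_def
  by (simp add: sum_distrib_left mult_ac)

lemma tr_kb_mult: "tr (ket_bra x x ** A) = cinner x (A *v x)"
proof -
  have "tr (ket_bra x x ** A) = (\<Sum>i\<in>UNIV. \<Sum>k\<in>UNIV. x $ i * cnj (x $ k) * A $ k $ i)"
    unfolding tr_def matrix_matrix_mult_def by simp
  also have "\<dots> = (\<Sum>k\<in>UNIV. \<Sum>i\<in>UNIV. x $ i * cnj (x $ k) * A $ k $ i)" by (rule sum.swap)
  also have "\<dots> = cinner x (A *v x)"
    unfolding cinner_def matrix_vector_mult_def by (simp add: sum_distrib_left mult_ac)
  finally show ?thesis .
qed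

lemma G_pos:
  fixes \<L> \<Psi> :: "('n::finite) sop" and G H :: "'n op"
  assumes pres: "\<And>\<rho>. \<L> \<rho> = \<Psi> \<rho> - (G ** \<rho> + \<rho> ** G) - \<i> *# (H ** \<rho> - \<rho> ** H)"
    and cp: "completely_positive \<Psi>"
    and tni: "trace_nonincreasing \<L>"
  shows "0 \<le> Re (cinner x (G *v x))"
proof -
  have clin: "clinear_sop \<Psi>" using cp by (simp add: completely_positive_def)
  have Leq: "\<L> = (\<lambda>\<rho>. \<Psi> \<rho> - (G ** \<rho> + \<rho> ** G) - \<i> *# (H ** \<rho> - \<rho> ** H))"
    using pres by (rule ext)
  have cL: "clinear_sop \<L>" unfolding Leq by (rule L_clin[OF clin])
  define \<rho> where "\<rho> = ket_bra x x"
  have p: "psd \<rho>" unfolding \<rho>_def by (rule psd_ket_bra)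
  have "Re (tr (\<L> \<rho>)) \<le> 0" by (rule tni_trace[OF cL tni p])
  moreover have "tr (\<L> \<rho>) = tr (\<Psi> \<rho>) - 2 * cinner x (G *v x)"
    unfolding pres \<rho>_def by (simp add: tr_diff tr_add tr_cscale tr_mult_kb tr_kb_mult)
  moreover have "0 \<le> Re (tr (\<Psi> \<rho>))" by (rule psd_tr[OF cp_psd[OF cp p]])
  ultimately show ?thesis by simp
qed



lemma bl_mv: "bounded_linear (\<lambda>A::('n::finite) op. A *v x)"
  unfolding linear_conv_bounded_linear[symmetric]
  by (intro linearI) (simp_all add: vec_eq_iff matrix_vector_mult_def scaleR_sum_right distrib_right sum.distrib)

lemma int_opnorm:
  fixes L :: "('n::finite) sop"
  assumes haar: "haar \<mu>" and cL: "clinear_sop L"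
  shows "opnorm (integral\<^sup>L \<mu> (\<lambda>U. L U ** adj U)) \<le> sopnorm L"
proof -
  interpret prob_space \<mu> using haar_prob[OF haar] .
  have s0: "0 \<le> sopnorm L"
    using opnorm_nonneg[of "L 0"] sopnorm_ge[OF cL, of 0] by (simp add: opnorm_zero)
  define F where "F U = L U ** adj U" for U
  have iF: "integrable \<mu> F" unfolding F_def by (rule int_integrable[OF haar cL])
  show ?thesis unfolding F_def[symmetric]
  proof (rule opnorm_le[OF s0])
    fix x
    have ig: "integrable \<mu> (\<lambda>U. F U *v x)"
      using Bochner_Integration.integrable_bounded_linear[OF bl_mv iF] .
    have "integral\<^sup>L \<mu> F *v x = integral\<^sup>L \<mu> (\<lambda>U. F U *v x)"
      using integral_bounded_linear[OF bl_mv iF] by simp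
    then have "norm (integral\<^sup>L \<mu> F *v x) \<le> integral\<^sup>L \<mu> (\<lambda>U. norm (F U *v x))"
      using integral_norm_bound by metis
    also have "\<dots> \<le> integral\<^sup>L \<mu> (\<lambda>U. sopnorm L * norm x)"
    proof (rule integral_mono_AE)
      show "integrable \<mu> (\<lambda>U. norm (F U *v x))" using ig by (rule integrable_norm)
      show "integrable \<mu> (\<lambda>U. sopnorm L * norm x)" by simp
      show "AE U in \<mu>. norm (F U *v x) \<le> sopnorm L * norm x"
        using haar_AE_unitary[OF haar]
      proof eventually_elim
        case (elim U)
        have "norm (F U *v x) \<le> opnorm (F U) * norm x" by (rule opnorm_mv)
        also have "opnorm (F U) \<le> opnorm (L U) * opnorm (adj U)" unfolding F_def by (rule opnorm_mult)
        also have "\<dots> \<le> sopnorm L * 1"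
          by (intro mult_mono sopnorm_ge[OF cL] unitary_opnorm unitary_adj elim s0 opnorm_nonneg)
        finally show ?case by (simp add: mult_right_mono)
      qed
    qed
    also have "\<dots> = sopnorm L * norm x" by (simp add: prob_space)
    finally show "norm (integral\<^sup>L \<mu> F *v x) \<le> sopnorm L * norm x" .
  qed
qed

lemma cq_add: "cinner x ((A + B) *v x) = cinner x (A *v x) + cinner x (B *v x)"
  by (simp add: matrix_vector_mult_add_rdistrib cinner_def distrib_left sum.distrib)
lemma cq_diff: "cinner x ((A - B) *v x) = cinner x (A *v x) - cinner x (B *v x)"
  by (simp add: matrix_vector_mult_diff_rdistrib cinner_def right_diff_distrib sum_subtractf)
lemma cq_neg: "cinner x ((- A) *v x) = - cinner x (A *v x)"
  using cq_diff[of x 0 A] by (simp add: cinner_def matrix_vector_mult_def)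
lemma cq_scale: "cinner x ((c *# A) *v x) = c * cinner x (A *v x)"
  by (simp add: cscale_mv cinner_cmult_right)
lemma cq_one: "cinner x (mat 1 *v x) = of_real ((norm x)^2)"
  by (simp add: cinner_self)

lemma herm_cinner_real: "hermitian A \<Longrightarrow> cinner x (A *v x) = of_real (Re (cinner x (A *v x)))"
  using herm_real[of A x] by (simp add: complex_eq_iff)

lemma opnorm_prod_le: "opnorm A \<le> s \<Longrightarrow> opnorm B \<le> 1 \<Longrightarrow> opnorm (A ** B) \<le> s \<and> opnorm (B ** A) \<le> s"
proof -
  assume a: "opnorm A \<le> s" and b: "opnorm B \<le> 1"
  have s: "0 \<le> s" using a opnorm_nonneg[of A] by simp
  have "opnorm A * opnorm B \<le> s * 1" by (intro mult_mono a b s opnorm_nonneg)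
  moreover have "opnorm B * opnorm A \<le> 1 * s" by (intro mult_mono a b s opnorm_nonneg) simp
  ultimately show ?thesis using opnorm_mult[of A B] opnorm_mult[of B A] by simp
qed

theorem lemma1:
  fixes \<L> \<Psi> :: "('n::finite) sop" and G H :: "'n op" and \<mu> :: "'n op measure"
  assumes pres: "\<And>\<rho>. \<L> \<rho> = \<Psi> \<rho> - (G ** \<rho> + \<rho> ** G) - \<i> *# (H ** \<rho> - \<rho> ** H)"
    and cp: "completely_positive \<Psi>"
    and hG: "hermitian G" and hH: "hermitian H"
    and supp: "supported_trace_zero (jam \<Psi>)"
    and trH: "tr H = 0"
    and tni: "trace_nonincreasing \<L>"
    and haar: "haar \<mu>"
  shows "integral\<^sup>L \<mu> (\<lambda>U. \<L> U ** adj U)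
           = - G - (tr G / of_nat CARD('n)) *# mat 1 - \<i> *# H
         \<and> opnorm G \<le> sopnorm \<L>
         \<and> opnorm H \<le> sopnorm \<L>
         \<and> sopnorm \<Psi> \<le> 5 * sopnorm \<L>"
proof -
  have clin: "clinear_sop \<Psi>" using cp by (simp add: completely_positive_def)
  have Leq: "\<L> = (\<lambda>\<rho>. \<Psi> \<rho> - (G ** \<rho> + \<rho> ** G) - \<i> *# (H ** \<rho> - \<rho> ** H))"
    using pres by (rule ext)
  have cL: "clinear_sop \<L>" unfolding Leq by (rule L_clin[OF clin])
  define M where "M = integral\<^sup>L \<mu> (\<lambda>U. \<L> U ** adj U)"
  define c where "c = tr G / of_nat CARD('n)"
  have c1: "M = - G - c *# mat 1 - \<i> *# H"
    unfolding M_def c_def by (rule first_conj[OF pres clin supp trH haar])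
  have oM: "opnorm M \<le> sopnorm \<L>" unfolding M_def by (rule int_opnorm[OF haar cL])
  have s0: "0 \<le> sopnorm \<L>" using oM opnorm_nonneg[of M] by simp
  have gpos: "0 \<le> Re (cinner x (G *v x))" for x by (rule G_pos[OF pres cp tni])
  have trG: "0 \<le> Re (tr G) \<and> Im (tr G) = 0"
  proof -
    have "0 \<le> Re (G $ i $ i) \<and> Im (G $ i $ i) = 0" for i
      using gpos[of "ev i"] herm_real[OF hG, of "ev i"] by (simp add: cinner_ev)
    then show ?thesis unfolding tr_def by (simp add: Re_sum Im_sum sum_nonneg)
  qed
  have cre: "0 \<le> Re c" "Im c = 0" unfolding c_def using trG by (simp_all add: Re_divide_of_nat Im_divide_of_nat)
  have cqM: "cinner x (M *v x) = - cinner x (G *v x) - c * of_real ((norm x)^2) - \<i> * cinner x (H *v x)" for x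
    unfolding c1 by (simp add: cq_diff cq_neg cq_scale cq_one cinner_self)
  have bnd: "\<bar>Re (cinner x (N *v x))\<bar> \<le> opnorm N * (norm x)^2" for N x
  proof -
    have "\<bar>Re (cinner x (N *v x))\<bar> = \<bar>x \<bullet> (N *v x)\<bar>" by (simp add: Re_cinner)
    also have "\<dots> \<le> norm x * norm (N *v x)" by (rule Cauchy_Schwarz_ineq2)
    also have "\<dots> \<le> norm x * (opnorm N * norm x)" by (intro mult_left_mono opnorm_mv) simp
    finally show ?thesis by (simp add: power2_eq_square mult_ac)
  qed
  have oG: "opnorm G \<le> sopnorm \<L>"
  proof -
    have "opnorm G \<le> opnorm M"
    proof (rule numrad[OF hG opnorm_nonneg])
      fix x
      have hx: "Im (cinner x (H *v x)) = 0" "Im (cinner x (G *v x)) = 0"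
        using herm_real[OF hH] herm_real[OF hG] by auto
      have "Re (cinner x (M *v x)) = - (Re (cinner x (G *v x)) + Re c * (norm x)^2)"
        unfolding cqM using hx cre by simp
      then have "Re (cinner x (G *v x)) + Re c * (norm x)^2 \<le> opnorm M * (norm x)^2"
        using bnd[of x M] by linarith
      moreover have "0 \<le> Re c * (norm x)^2" using cre by simp
      ultimately show "\<bar>x \<bullet> (G *v x)\<bar> \<le> opnorm M * (norm x)^2"
        using gpos[of x] by (simp add: Re_cinner[symmetric])
    qed
    then show ?thesis using oM by simp
  qed
  have oH: "opnorm H \<le> sopnorm \<L>"
  proof -
    have "opnorm H \<le> opnorm M"
    proof (rule numrad[OF hH opnorm_nonneg])
      fix x
      have hx: "Im (cinner x (H *v x)) = 0" "Im (cinner x (G *v x)) = 0"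
        using herm_real[OF hH] herm_real[OF hG] by auto
      have "Re (cinner x ((\<i> *# M) *v x)) = Re (cinner x (H *v x))"
        unfolding cq_scale cqM using hx cre by (simp add: algebra_simps)
      then have "\<bar>Re (cinner x (H *v x))\<bar> \<le> opnorm (\<i> *# M) * (norm x)^2"
        using bnd[of x "\<i> *# M"] by simp
      also have "\<dots> \<le> opnorm M * (norm x)^2"
        using opnorm_cscale[of "\<i>" M] by (intro mult_right_mono) simp_all
      finally show "\<bar>x \<bullet> (H *v x)\<bar> \<le> opnorm M * (norm x)^2" by (simp add: Re_cinner)
    qed
    then show ?thesis using oM by simp
  qed
  have oP: "sopnorm \<Psi> \<le> 5 * sopnorm \<L>"
  proof (rule sopnorm_le)
    fix \<rho> :: "'n op" assume r: "opnorm \<rho> \<le> 1"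
    have eq: "\<Psi> \<rho> = \<L> \<rho> + (G ** \<rho> + \<rho> ** G) + \<i> *# (H ** \<rho> - \<rho> ** H)"
      unfolding pres by simp
    have a1: "opnorm (\<L> \<rho>) \<le> sopnorm \<L>" by (rule sopnorm_ge[OF cL r])
    have a2: "opnorm (G ** \<rho>) \<le> sopnorm \<L>" "opnorm (\<rho> ** G) \<le> sopnorm \<L>"
      using opnorm_prod_le[OF oG r] by auto
    have a3: "opnorm (H ** \<rho>) \<le> sopnorm \<L>" "opnorm (\<rho> ** H) \<le> sopnorm \<L>"
      using opnorm_prod_le[OF oH r] by auto
    have "opnorm (\<Psi> \<rho>) \<le> opnorm (\<L> \<rho> + (G ** \<rho> + \<rho> ** G)) + opnorm (\<i> *# (H ** \<rho> - \<rho> ** H))"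
      unfolding eq by (rule opnorm_add)
    also have "\<dots> \<le> (opnorm (\<L> \<rho>) + (opnorm (G ** \<rho>) + opnorm (\<rho> ** G))) + (opnorm (H ** \<rho>) + opnorm (\<rho> ** H))"
    proof (rule add_mono)
      show "opnorm (\<L> \<rho> + (G ** \<rho> + \<rho> ** G)) \<le> opnorm (\<L> \<rho>) + (opnorm (G ** \<rho>) + opnorm (\<rho> ** G))"
        using opnorm_add[of "\<L> \<rho>" "G ** \<rho> + \<rho> ** G"] opnorm_add[of "G ** \<rho>" "\<rho> ** G"] by linarith
      show "opnorm (\<i> *# (H ** \<rho> - \<rho> ** H)) \<le> opnorm (H ** \<rho>) + opnorm (\<rho> ** H)"
        using opnorm_cscale[of "\<i>" "H ** \<rho> - \<rho> ** H"] opnorm_diff[of "H ** \<rho>" "\<rho> ** H"] by simp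
    qed
    also have "\<dots> \<le> 5 * sopnorm \<L>" using a1 a2 a3 by linarith
    finally show "opnorm (\<Psi> \<rho>) \<le> 5 * sopnorm \<L>" .
  qed
  show ?thesis using c1 oG oH oP unfolding M_def c_def by blast
qed

end
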